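(* The Sorgenfrey line $\mathbb S$ is homeomorphic to $\langle{}^\omega\omega,\sigma_{\mathbb S}\rangle$.
   Context: $\mathbb S$ is $\mathbb R$ with the topology generated by $\{[a,b):a,b\in\mathbb R\}$. ${}^\omega\omega$ is the set of infinite sequences of naturals; for $a,b\in{}^\omega\omega$, $a\triangleleft b$ iff there is $n$ with $a\upharpoonright n=b\upharpoonright n$ and $a(n)<b(n)$. $\sigma_{\mathbb S}$ is the topology on ${}^\omega\omega$ with base consisting of the sets $B(p,m)=\{p\}\cup\{r\in{}^\omega\omega: r\upharpoonright m=p\upharpoonright m,\ p\triangleleft r\}$, $p\in{}^\omega\omega$, $m\in\omega$. *)

theory Defs
  imports "HOL-Analysis.Analysis"
begin

definition sorgenfrey :: "real topology" where
  "sorgenfrey = topology_generated_by {{a..<b} | a b. True}"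

definition lex_less :: "(nat \<Rightarrow> nat) \<Rightarrow> (nat \<Rightarrow> nat) \<Rightarrow> bool" where
  "lex_less a b \<longleftrightarrow> (\<exists>n. (\<forall>i<n. a i = b i) \<and> a n < b n)"

definition sigmaS_basic :: "(nat \<Rightarrow> nat) \<Rightarrow> nat \<Rightarrow> (nat \<Rightarrow> nat) set" where
  "sigmaS_basic p m = {p} \<union> {r. (\<forall>i<m. r i = p i) \<and> lex_less p r}"

definition sigmaS :: "(nat \<Rightarrow> nat) topology" where
  "sigmaS = topology_generated_by {sigmaS_basic p m | p m. True}"

end

theory Submission
  imports Defs
begin

fun lo :: "nat list \<Rightarrow> real" and lnn :: "nat list \<Rightarrow> real" where
  "lo [] = 0"
| "lo (k # s) = 1 - (1/2)^k + (1/2)^(Suc k) * lo s"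
| "lnn [] = 1"
| "lnn (k # s) = (1/2)^(Suc k) * lnn s"

definition R :: "nat list \<Rightarrow> real" where "R s = lo s + lnn s"

lemma lo_ln_bounds: "0 \<le> lo s \<and> 0 < lnn s \<and> lo s + lnn s \<le> 1 \<and> lnn s \<le> (1/2)^length s"
proof (induction s)
  case Nil then show ?case by simp
next
  case (Cons k s)
  let ?h = "(1/2::real)^k"
  have h: "0 < ?h" "?h \<le> 1" by (auto simp: power_le_one)
  have "?h/2 * (lo s + lnn s) \<le> ?h/2" using Cons h by (simp add: mult_le_one)
  moreover have "?h/2 * lnn s \<le> 1/2 * (1/2)^length s" using Cons h by (intro mult_mono) auto
  moreover have "0 \<le> ?h/2 * lo s" "0 < ?h/2 * lnn s" using Cons h by auto
  moreover have "lo (k#s) = 1 - ?h + ?h/2 * lo s" "lnn (k#s) = ?h/2 * lnn s" by auto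
  ultimately show ?case using h by (simp only: length_Cons power_Suc) (auto simp: algebra_simps)
qed

lemma lo_app: "lo (s @ t) = lo s + lnn s * lo t"
  by (induction s) (auto simp: algebra_simps)
lemma ln_app: "lnn (s @ t) = lnn s * lnn t"
  by (induction s) (auto simp: algebra_simps)

lemma lo_snoc: "lo (s @ [k]) = lo s + lnn s * (1 - (1/2)^k)"
  by (simp add: lo_app)
lemma R_snoc: "R (s @ [k]) = lo s + lnn s * (1 - (1/2)^Suc k)"
  by (simp add: R_def lo_app ln_app algebra_simps)

definition pre :: "(nat \<Rightarrow> nat) \<Rightarrow> nat \<Rightarrow> nat list" where "pre y n = map y [0..<n]"

lemma pre_Suc: "pre y (Suc n) = pre y n @ [y n]" by (simp add: pre_def)
lemma pre_app: "m \<le> n \<Longrightarrow> pre y n = pre y m @ map y [m..<n]"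
  unfolding pre_def by (metis le_Suc_ex map_append upt_add_eq_append zero_le)
lemma pre_eq: "pre y n = pre z n \<longleftrightarrow> (\<forall>i<n. y i = z i)"
  by (auto simp: pre_def map_eq_conv)
lemma length_pre[simp]: "length (pre y n) = n" by (simp add: pre_def)

lemma lo_mono: "m \<le> n \<Longrightarrow> lo (pre y m) \<le> lo (pre y n)"
  using pre_app[of m n y] lo_app lo_ln_bounds
  by (metis le_add_same_cancel1 mult_nonneg_nonneg less_imp_le)

lemma R_mono: "m \<le> n \<Longrightarrow> R (pre y n) \<le> R (pre y m)"
proof -
  assume "m \<le> n"
  then have e: "pre y n = pre y m @ map y [m..<n]" by (rule pre_app)
  let ?s = "pre y m" and ?t = "map y [m..<n]"
  have "R (pre y n) = lo ?s + lnn ?s * (lo ?t + lnn ?t)" unfolding e R_def lo_app ln_app by (simp add: algebra_simps)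
  also have "\<dots> \<le> lo ?s + lnn ?s * 1" using lo_ln_bounds[of ?s] lo_ln_bounds[of ?t]
    by (intro add_left_mono mult_left_mono) auto
  finally show ?thesis by (simp add: R_def)
qed

lemma lo_le_R: "lo (pre y n) \<le> R (pre y m)"
proof (cases "n \<le> m")
  case True then show ?thesis using lo_mono[OF True, of y] lo_ln_bounds[of "pre y m"] by (simp add: R_def)
next
  case False
  then have "lo (pre y m) \<le> lo (pre y n)" "R (pre y n) \<le> R (pre y m)" using lo_mono R_mono by auto
  then show ?thesis using lo_ln_bounds[of "pre y n"] by (simp add: R_def)
qed

definition f :: "(nat \<Rightarrow> nat) \<Rightarrow> real" where "f y = (SUP n. lo (pre y n))"

lemma f_bounds: "lo (pre y m) \<le> f y \<and> f y < R (pre y m)"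
proof
  have bdd: "bdd_above (range (\<lambda>n. lo (pre y n)))"
    using lo_le_R[of y _ 0] by (auto intro!: bdd_aboveI)
  show "lo (pre y m) \<le> f y" unfolding f_def by (rule cSUP_upper[OF _ bdd]) auto
  have "f y \<le> R (pre y (Suc m))" unfolding f_def by (rule cSUP_least) (auto intro: lo_le_R)
  also have "\<dots> < R (pre y m)" unfolding pre_Suc R_snoc
    using lo_ln_bounds[of "pre y m"] by (simp add: R_def)
  finally show "f y < R (pre y m)" .
qed

lemma step_order: "pre y i = pre z i \<Longrightarrow> y i < z i \<Longrightarrow> R (pre y (Suc i)) \<le> lo (pre z (Suc i))"
proof -
  assume e: "pre y i = pre z i" and lt: "y i < z i"
  have "(1/2::real)^z i \<le> (1/2)^Suc (y i)" using lt by (intro power_decreasing) auto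
  then show ?thesis unfolding pre_Suc R_snoc lo_snoc e using lo_ln_bounds[of "pre z i"]
    by (intro add_left_mono mult_left_mono) auto
qed

lemma f_strict: "(\<forall>j<i. y j = z j) \<Longrightarrow> y i < z i \<Longrightarrow> f y < f z"
proof -
  assume a: "\<forall>j<i. y j = z j" "y i < z i"
  then have "pre y i = pre z i" by (simp add: pre_eq)
  then have "R (pre y (Suc i)) \<le> lo (pre z (Suc i))" using a step_order by blast
  then show ?thesis using f_bounds[of y "Suc i"] f_bounds[of z "Suc i"] by linarith
qed

lemma f_lex: "lex_less y z \<Longrightarrow> f y < f z"
  unfolding lex_less_def using f_strict by blast

lemma lex_total: "y \<noteq> z \<Longrightarrow> lex_less y z \<or> lex_less z y"
proof -
  assume "y \<noteq> z"
  then obtain n where "y n \<noteq> z n" by auto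
  define i where "i = (LEAST n. y n \<noteq> z n)"
  have "y i \<noteq> z i" unfolding i_def by (rule LeastI) fact
  moreover have "\<forall>j<i. y j = z j" unfolding i_def using not_less_Least by blast
  ultimately show ?thesis unfolding lex_less_def
    by (metis linorder_neqE_nat)
qed

lemma f_inj: "f y = f z \<Longrightarrow> y = z"
  using lex_total f_lex by force

lemma cyl: "lo (pre p m) \<le> f z \<Longrightarrow> f z < R (pre p m) \<Longrightarrow> pre z m = pre p m"
proof (rule ccontr)
  assume a: "lo (pre p m) \<le> f z" "f z < R (pre p m)" "pre z m \<noteq> pre p m"
  then obtain n where n: "n < m" "z n \<noteq> p n" by (auto simp: pre_eq)
  define i where "i = (LEAST n. z n \<noteq> p n)"
  have ne: "z i \<noteq> p i" unfolding i_def by (rule LeastI) (rule n(2))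
  have im: "i < m" using Least_le[of "\<lambda>n. z n \<noteq> p n" n] n unfolding i_def[symmetric] by simp
  have "\<forall>j<i. z j = p j" unfolding i_def using not_less_Least by blast
  then have eq: "pre z i = pre p i" by (simp add: pre_eq)
  show False
  proof (cases "z i < p i")
    case True
    have "f z < R (pre z (Suc i))" using f_bounds by blast
    also have "\<dots> \<le> lo (pre p (Suc i))" by (rule step_order[OF eq True])
    also have "\<dots> \<le> lo (pre p m)" using im by (intro lo_mono) simp
    finally show False using a by simp
  next
    case False
    then have lt: "p i < z i" using ne by simp
    have "R (pre p m) \<le> R (pre p (Suc i))" using im by (intro R_mono) simp
    also have "\<dots> \<le> lo (pre z (Suc i))" by (rule step_order[OF eq[symmetric] lt])
    also have "\<dots> \<le> f z" using f_bounds by blast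
    finally show False using a by simp
  qed
qed

lemma split_step:
  assumes "lo s \<le> t" "t < R s"
  shows "\<exists>k. lo (s@[k]) \<le> t \<and> t < R (s@[k])"
proof -
  have ln: "0 < lnn s" using lo_ln_bounds by blast
  define u where "u = (t - lo s) / lnn s"
  have tu: "t = lo s + lnn s * u" using ln by (simp add: u_def)
  have u0: "0 \<le> u" using assms ln by (simp add: u_def)
  have "t - lo s < lnn s" using assms by (simp add: R_def)
  then have u1: "u < 1" using ln unfolding u_def by simp
  obtain n where n: "(1/2::real)^n < 1 - u" using real_arch_pow_inv[of "1-u" "1/2"] u1 by auto
  define k where "k = (LEAST k. (1/2::real)^Suc k < 1 - u)"
  have "(1/2::real)^n / 2 \<le> (1/2)^n" by simp
  then have "(1/2::real)^n / 2 < 1 - u" using n by linarith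
  then have ex: "(1/2::real)^Suc n < 1 - u" by simp
  have k1: "(1/2::real)^Suc k < 1 - u" unfolding k_def by (rule LeastI[of "\<lambda>k. (1/2::real)^Suc k < 1 - u", OF ex])
  have k2: "1 - u \<le> (1/2::real)^k"
  proof (cases k)
    case 0 then show ?thesis using u0 by simp
  next
    case (Suc j)
    have "\<not> (1/2::real)^Suc j < 1 - u"
    proof
      assume "(1/2::real)^Suc j < 1 - u"
      then have "k \<le> j" unfolding k_def by (rule Least_le)
      then show False using Suc by simp
    qed
    then show ?thesis using Suc by simp
  qed
  have "lo (s@[k]) \<le> t" unfolding lo_snoc tu using ln k2 by (intro add_left_mono mult_left_mono) auto
  moreover have "t < R (s@[k])" unfolding R_snoc tu using ln k1 by (intro add_strict_left_mono mult_strict_left_mono) auto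
  ultimately show ?thesis by blast
qed

lemma eq_by_pow: "(\<And>n. \<bar>a - b\<bar> \<le> (1/2::real)^n) \<Longrightarrow> a = b"
proof (rule ccontr)
  assume h: "\<And>n. \<bar>a - b\<bar> \<le> (1/2::real)^n" "a \<noteq> b"
  obtain n where "(1/2::real)^n < \<bar>a - b\<bar>" using real_arch_pow_inv[of "\<bar>a - b\<bar>" "1/2"] h(2) by auto
  then show False using h(1)[of n] by simp
qed

lemma f_surj:
  assumes "0 \<le> t" "t < 1"
  shows "\<exists>y. f y = t"
proof -
  define P where "P = rec_nat [] (\<lambda>n s. s @ [SOME k. lo (s@[k]) \<le> t \<and> t < R (s@[k])])"
  have P0: "P 0 = []" and PS: "\<And>n. P (Suc n) = P n @ [SOME k. lo (P n@[k]) \<le> t \<and> t < R (P n@[k])]"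
    by (simp_all add: P_def)
  have inP: "lo (P n) \<le> t \<and> t < R (P n)" for n
  proof (induction n)
    case 0 then show ?case using assms by (simp add: P0 R_def)
  next
    case (Suc n)
    have "\<exists>k. lo (P n@[k]) \<le> t \<and> t < R (P n@[k])" using split_step Suc by blast
    then show ?case unfolding PS by (rule someI_ex)
  qed
  define y where "y n = (SOME k. lo (P n@[k]) \<le> t \<and> t < R (P n@[k]))" for n
  have pe: "pre y n = P n" for n
  proof (induction n)
    case 0 show ?case by (simp add: pre_def P0)
  next
    case (Suc n) show ?case by (simp only: pre_Suc PS Suc.IH) (simp add: y_def)
  qed
  have "f y = t"
  proof (rule eq_by_pow)
    fix n
    have "lo (P n) \<le> f y \<and> f y < R (P n)" using f_bounds[of y n] pe by simp
    moreover have "lnn (P n) \<le> (1/2)^n" using lo_ln_bounds[of "P n"] pe[of n] by (metis length_pre)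
    ultimately show "\<bar>f y - t\<bar> \<le> (1/2)^n" using inP[of n] unfolding R_def abs_le_iff by linarith
  qed
  then show ?thesis by blast
qed

lemma gen_local:
  assumes "\<And>x. x \<in> U \<Longrightarrow> \<exists>B\<in>S. x \<in> B \<and> B \<subseteq> U"
  shows "generate_topology_on S U"
proof -
  have "U = \<Union>{B\<in>S. B \<subseteq> U}" using assms by blast
  moreover have "generate_topology_on S (\<Union>{B\<in>S. B \<subseteq> U})"
    by (rule generate_topology_on.UN) (auto intro: generate_topology_on.Basis)
  ultimately show ?thesis by simp
qed

definition stl :: "(nat \<Rightarrow> nat) \<Rightarrow> nat \<Rightarrow> nat" where "stl x = (\<lambda>n. x (Suc n))"
definition G :: "(nat \<Rightarrow> nat) \<Rightarrow> real" where "G x = of_int (int_decode (x 0)) + f (stl x)"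

lemma f01: "0 \<le> f y \<and> f y < 1"
  using f_bounds[of y 0] by (simp add: pre_def R_def)

lemma floor_G: "\<lfloor>G x\<rfloor> = int_decode (x 0)"
  unfolding G_def using f01[of "stl x"] by (simp add: floor_unique)

lemma G_inj: "G x = G y \<Longrightarrow> x = y"
proof -
  assume e: "G x = G y"
  then have "int_decode (x 0) = int_decode (y 0)" using floor_G by metis
  then have 0: "x 0 = y 0" by (metis int_decode_inverse)
  then have "f (stl x) = f (stl y)" using e by (simp add: G_def)
  then have "stl x = stl y" by (rule f_inj)
  then have "\<forall>n. x (Suc n) = y (Suc n)" unfolding stl_def by meson
  then show "x = y" using 0 by (metis not0_implies_Suc ext)
qed

lemma G_surj: "\<exists>x. G x = u"
proof -
  have "0 \<le> u - of_int \<lfloor>u\<rfloor>" "u - of_int \<lfloor>u\<rfloor> < 1" by linarith+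
  then obtain y where y: "f y = u - of_int \<lfloor>u\<rfloor>" using f_surj by blast
  define x where "x n = (case n of 0 \<Rightarrow> int_encode \<lfloor>u\<rfloor> | Suc m \<Rightarrow> y m)" for n
  have "stl x = y" by (simp add: stl_def x_def)
  then have "G x = u" by (simp add: G_def x_def y)
  then show ?thesis by blast
qed

lemma lex_trans: "lex_less x y \<Longrightarrow> lex_less y z \<Longrightarrow> lex_less x z"
proof -
  assume "lex_less x y" "lex_less y z"
  then obtain n1 n2 where a: "\<forall>i<n1. x i = y i" "x n1 < y n1" and b: "\<forall>i<n2. y i = z i" "y n2 < z n2"
    unfolding lex_less_def by blast
  show ?thesis unfolding lex_less_def
  proof (cases n1 n2 rule: linorder_cases)
    case less then show "\<exists>n. (\<forall>i<n. x i = z i) \<and> x n < z n" using a b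
      by (intro exI[of _ n1]) auto
  next
    case equal then show "\<exists>n. (\<forall>i<n. x i = z i) \<and> x n < z n" using a b
      by (intro exI[of _ n1]) auto
  next
    case greater then show "\<exists>n. (\<forall>i<n. x i = z i) \<and> x n < z n" using a b
      by (intro exI[of _ n2]) auto
  qed
qed

lemma basic_sub: "q \<in> sigmaS_basic p m \<Longrightarrow> m \<le> m' \<Longrightarrow> sigmaS_basic q m' \<subseteq> sigmaS_basic p m"
  unfolding sigmaS_basic_def using lex_trans by auto

lemma lex_stl: "x 0 = y 0 \<Longrightarrow> lex_less x y \<longleftrightarrow> lex_less (stl x) (stl y)"
proof
  assume 0: "x 0 = y 0" and "lex_less x y"
  then obtain n where n: "\<forall>i<n. x i = y i" "x n < y n" unfolding lex_less_def by blast
  then obtain n' where "n = Suc n'" using 0 by (cases n) auto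
  then show "lex_less (stl x) (stl y)" unfolding lex_less_def stl_def using n
    by (intro exI[of _ n']) auto
next
  assume 0: "x 0 = y 0" and "lex_less (stl x) (stl y)"
  then obtain n where n: "\<forall>i<n. x (Suc i) = y (Suc i)" "x (Suc n) < y (Suc n)" unfolding lex_less_def stl_def by blast
  have "\<forall>i<Suc n. x i = y i" using n 0 by (metis less_Suc_eq_0_disj)
  then show "lex_less x y" unfolding lex_less_def using n by blast
qed

lemma cyl_Suc: "(\<forall>i<Suc m. r i = q i) \<longleftrightarrow> r 0 = q 0 \<and> pre (stl r) m = pre (stl q) m"
  unfolding pre_eq stl_def by (metis less_Suc_eq_0_disj Suc_less_eq zero_less_Suc)

lemma G_img: "G ` sigmaS_basic q (Suc m) = {G q ..< of_int (int_decode (q 0)) + R (pre (stl q) m)}"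
proof (intro equalityI subsetI)
  fix u assume "u \<in> G ` sigmaS_basic q (Suc m)"
  then obtain r where u: "u = G r" and r: "r = q \<or> ((\<forall>i<Suc m. r i = q i) \<and> lex_less q r)"
    unfolding sigmaS_basic_def by auto
  show "u \<in> {G q ..< of_int (int_decode (q 0)) + R (pre (stl q) m)}"
  proof (cases "r = q")
    case True then show ?thesis using u f_bounds[of "stl q" m] by (simp add: G_def)
  next
    case False
    then have c: "r 0 = q 0" "pre (stl r) m = pre (stl q) m" "lex_less q r" using r cyl_Suc by auto
    then have "f (stl q) < f (stl r)" using lex_stl f_lex by metis
    moreover have "f (stl r) < R (pre (stl q) m)" using f_bounds[of "stl r" m] c by simp
    ultimately show ?thesis using u c by (simp add: G_def)
  qed
next
  fix u assume u: "u \<in> {G q ..< of_int (int_decode (q 0)) + R (pre (stl q) m)}"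
  obtain r where r: "G r = u" using G_surj by blast
  have R1: "R (pre (stl q) m) \<le> 1" using lo_ln_bounds[of "pre (stl q) m"] by (simp add: R_def)
  have "of_int (int_decode (q 0)) \<le> G q" using f01[of "stl q"] by (simp add: G_def)
  then have "\<lfloor>u\<rfloor> = int_decode (q 0)" using u R1 by (intro floor_unique) auto
  then have "int_decode (r 0) = int_decode (q 0)" using r floor_G by metis
  then have r0: "r 0 = q 0" by (metis int_decode_inverse)
  have fr: "f (stl r) = u - of_int (int_decode (q 0))" using r r0 by (simp add: G_def)
  have "f (stl q) \<le> f (stl r)" using u fr by (simp add: G_def)
  moreover have "lo (pre (stl q) m) \<le> f (stl q)" using f_bounds by blast
  ultimately have "pre (stl r) m = pre (stl q) m" using fr u by (intro cyl) auto
  moreover have "stl r = stl q \<or> lex_less (stl q) (stl r)"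
    using lex_total f_lex \<open>f (stl q) \<le> f (stl r)\<close> by fastforce
  ultimately have "r = q \<or> ((\<forall>i<Suc m. r i = q i) \<and> lex_less q r)"
    using r0 cyl_Suc lex_stl G_inj by (metis G_def)
  then show "u \<in> G ` sigmaS_basic q (Suc m)" using r unfolding sigmaS_basic_def by auto
qed

lemma top_sorg: "topspace sorgenfrey = UNIV"
proof -
  have "x \<in> \<Union>{{a..<b} | a b. True}" for x :: real
    by (rule UnionI[of "{x..<x+1}"]) auto
  then show ?thesis unfolding sorgenfrey_def by auto
qed

lemma top_sig: "topspace sigmaS = UNIV"
proof -
  have "x \<in> \<Union>{sigmaS_basic p m | p m. True}" for x
    by (rule UnionI[of "sigmaS_basic x 0"]) (auto simp: sigmaS_basic_def)
  then show ?thesis unfolding sigmaS_def by auto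
qed

lemma G_open: "open_map sigmaS sorgenfrey G"
  unfolding open_map_def sigmaS_def sorgenfrey_def openin_topology_generated_by_iff
proof (intro allI impI)
  fix U assume "generate_topology_on {sigmaS_basic p m | p m. True} U"
  then show "generate_topology_on {{a..<b} | a b. True} (G ` U)"
  proof induction
    case Empty then show ?case by (simp add: generate_topology_on.Empty)
  next
    case (Int a b)
    have "G ` (a \<inter> b) = G ` a \<inter> G ` b" using G_inj by (intro image_Int) (auto intro: injI)
    then show ?case using Int by (simp add: generate_topology_on.Int)
  next
    case (UN K)
    then show ?case unfolding image_Union by (intro generate_topology_on.UN) auto
  next
    case (Basis s)
    then obtain p m where s: "s = sigmaS_basic p m" by blast
    show ?case
    proof (rule gen_local)
      fix u assume "u \<in> G ` s"
      then obtain q where q: "q \<in> s" "u = G q" by blast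
      have "G ` sigmaS_basic q (Suc m) \<subseteq> G ` s" using basic_sub[of q p m "Suc m"] q s by auto
      moreover have "u \<in> G ` sigmaS_basic q (Suc m)" using q by (auto simp: sigmaS_basic_def)
      ultimately show "\<exists>B\<in>{{a..<b} | a b. True}. u \<in> B \<and> B \<subseteq> G ` s"
        by (intro bexI[of _ "G ` sigmaS_basic q (Suc m)"]) (auto simp only: G_img)
    qed
  qed
qed

lemma G_cont: "continuous_map sigmaS sorgenfrey G"
  unfolding sorgenfrey_def
proof (rule continuous_on_generated_topo)
  show "G ` topspace sigmaS \<subseteq> \<Union> {{a..<b} | a b. True}"
    using top_sorg unfolding sorgenfrey_def by auto
  fix U :: "real set" assume "U \<in> {{a..<b} | a b. True}"
  then obtain a b where U: "U = {a..<b}" by blast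
  show "openin sigmaS (G -` U \<inter> topspace sigmaS)"
    unfolding top_sig unfolding sigmaS_def openin_topology_generated_by_iff
  proof (rule gen_local)
    fix r assume "r \<in> G -` U \<inter> UNIV"
    then have r: "a \<le> G r" "G r < b" using U by auto
    obtain m where m: "(1/2::real)^m < b - G r" using real_arch_pow_inv[of "b - G r" "1/2"] r by auto
    have "lnn (pre (stl r) m) \<le> (1/2)^m" using lo_ln_bounds[of "pre (stl r) m"] by simp
    moreover have "lo (pre (stl r) m) \<le> f (stl r)" using f_bounds by blast
    ultimately have "of_int (int_decode (r 0)) + R (pre (stl r) m) \<le> b" using m
      unfolding R_def G_def by linarith
    then have "G ` sigmaS_basic r (Suc m) \<subseteq> U" unfolding G_img U using r by auto
    then have "sigmaS_basic r (Suc m) \<subseteq> G -` U \<inter> UNIV" by auto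
    moreover have "r \<in> sigmaS_basic r (Suc m)" by (simp add: sigmaS_basic_def)
    ultimately show "\<exists>B\<in>{sigmaS_basic p k | p k. True}. r \<in> B \<and> B \<subseteq> G -` U \<inter> UNIV" by blast
  qed
qed

theorem mainTheorem9:
  shows "sorgenfrey homeomorphic_space sigmaS"
proof -
  have "homeomorphic_map sigmaS sorgenfrey G"
  proof (rule bijective_open_imp_homeomorphic_map[OF G_cont G_open])
    show "G ` topspace sigmaS = topspace sorgenfrey" using G_surj unfolding top_sig top_sorg by (metis surj_def)
    show "inj_on G (topspace sigmaS)" using G_inj by (auto intro: inj_onI)
  qed
  then have "sigmaS homeomorphic_space sorgenfrey" by (rule homeomorphic_map_imp_homeomorphic_space)
  then show ?thesis by (rule homeomorphic_space_sym[THEN iffD1])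
qed

end
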